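(* Let $A(z,\lambda)=\sum_{i\ge0}A_i(z)\lambda^i\in\mathfrak{gl}_2(\mathbb{C}((z))[[\lambda]])$ and $R(z,\lambda)\in\mathrm{GL}_2(\mathbb{C}((z))[[\lambda]])$ satisfy: (1) $A(z,\lambda)$ is diagonal; (2) $R(z,0)\in\mathfrak{gl}_2(\mathbb{C}[[z]])$; (3) $\det R(z,0)\in\mathbb{C}[[z]]$ has a first-order zero at $z=0$; (4) $\tilde A:=R^{-1}AR+\lambda R^{-1}\frac{dR}{dz}\in\mathfrak{gl}_2(\mathbb{C}[[z,\lambda]])$. Then $A_1(z)\in z^{-1}\mathfrak{gl}_2(\mathbb{C}[[z]])$. *)

theory Defs
  imports "HOL-Analysis.Analysis" "HOL-Computational_Algebra.Formal_Laurent_Series"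
begin

text \<open>Elements of C((z))[[lambda]] are modelled as complex fls fps
  (power series in lambda with Laurent-series-in-z coefficients);
  2x2 matrices over them as complex fls fps ^2^2.\<close>

type_synonym mat2 = "complex fls fps ^ 2 ^ 2"

definition fps_dz :: "complex fls fps \<Rightarrow> complex fls fps" where
  "fps_dz f = Abs_fps (\<lambda>n. fls_deriv (fps_nth f n))"

definition mat_dz :: "mat2 \<Rightarrow> mat2" where
  "mat_dz M = (\<chi> i j. fps_dz (M $ i $ j))"

definition mat_lam :: "mat2 \<Rightarrow> mat2" where
  "mat_lam M = (\<chi> i j. fps_X * (M $ i $ j))"

definition mat_coeff :: "nat \<Rightarrow> mat2 \<Rightarrow> complex fls ^ 2 ^ 2" where
  "mat_coeff k M = (\<chi> i j. fps_nth (M $ i $ j) k)"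

text \<open>A Laurent series lies in C[[z]] iff its subdegree is nonnegative (0 has subdegree 0).\<close>
definition in_Cz :: "complex fls \<Rightarrow> bool" where
  "in_Cz f \<longleftrightarrow> fls_subdegree f \<ge> 0"

definition in_gl2_Czl :: "mat2 \<Rightarrow> bool" where
  "in_gl2_Czl M \<longleftrightarrow> (\<forall>i j k. in_Cz (fps_nth (M $ i $ j) k))"

end

theory Submission
  imports Defs
begin

notation fls_nth (infixl \<open>$$\<close> 75)

lemma in_Cz_iff: "in_Cz f \<longleftrightarrow> (\<forall>k<0. f $$ k = 0)"
  unfolding in_Cz_def
  by (metis fls_eq0_below_subdegree fls_subdegree_ge0I less_le_trans)

lemma in_Cz_add: "in_Cz f \<Longrightarrow> in_Cz g \<Longrightarrow> in_Cz (f + g)"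
  by (simp add: in_Cz_iff)

lemma in_Cz_diff: "in_Cz f \<Longrightarrow> in_Cz g \<Longrightarrow> in_Cz (f - g)"
  by (simp add: in_Cz_iff)

lemma in_Cz_mult: "in_Cz (f::complex fls) \<Longrightarrow> in_Cz g \<Longrightarrow> in_Cz (f * g)"
  unfolding in_Cz_iff
  by (metis add_nonneg_nonneg fls_times_nth_eq0 in_Cz_def in_Cz_iff less_le_trans)

lemma in_Cz_deriv: "in_Cz (f::complex fls) \<Longrightarrow> in_Cz (fls_deriv f)"
  unfolding in_Cz_iff
proof (intro allI impI)
  fix k :: int assume h: "\<forall>k<0. f $$ k = 0" and k: "k < 0"
  show "fls_deriv f $$ k = 0"
  proof (cases "k + 1 = 0")
    case True then show ?thesis by simp
  next
    case False then have "k + 1 < 0" using k by simp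
    then show ?thesis using h by simp
  qed
qed

lemma mc0_mult: "mat_coeff 0 (M ** N) = mat_coeff 0 M ** mat_coeff 0 N"
  by (simp add: mat_coeff_def matrix_matrix_mult_def vec_eq_iff fps_sum_nth)

lemma mc1_mult: "mat_coeff 1 (M ** N) = mat_coeff 0 M ** mat_coeff 1 N + mat_coeff 1 M ** mat_coeff 0 N"
  by (simp add: mat_coeff_def matrix_matrix_mult_def vec_eq_iff fps_sum_nth fps_mult_nth_1 sum.distrib)

lemma mc_add: "mat_coeff k (M + N) = mat_coeff k M + mat_coeff k N"
  by (simp add: mat_coeff_def vec_eq_iff)

lemma mc1_lam: "mat_coeff 1 (mat_lam M) = mat_coeff 0 M"
  by (simp add: mat_coeff_def mat_lam_def vec_eq_iff)

lemma mc0_lam: "mat_coeff 0 (mat_lam M) = 0"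
  by (simp add: mat_coeff_def mat_lam_def vec_eq_iff)

lemma mc_dz: "mat_coeff k (mat_dz M) $ i $ j = fls_deriv (mat_coeff k M $ i $ j)"
  by (simp add: mat_coeff_def mat_dz_def fps_dz_def)

lemma lam_left: "R ** mat_lam Y = mat_lam (R ** Y)"
  by (simp add: mat_lam_def matrix_matrix_mult_def vec_eq_iff sum_distrib_left mult.left_commute)

lemma rdistrib: "((B + C) ** A) = (B ** A) + (C ** A)"
  for A B C :: "'a::semiring_1^'n^'n"
  by (simp add: matrix_matrix_mult_def vec_eq_iff sum.distrib distrib_right)

lemma mat_left: "(mat c ** X) $ i $ j = c * X $ i $ j"
  for X :: "'a::comm_ring_1^'n^'n"
  by (simp add: matrix_matrix_mult_def mat_def if_distrib if_distribR sum.delta' cong: if_cong)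

lemma mat_right: "(X ** mat c) $ i $ j = X $ i $ j * c"
  for X :: "'a::comm_ring_1^'n^'n"
  by (simp add: matrix_matrix_mult_def mat_def if_distrib if_distribR sum.delta cong: if_cong)

lemma sub_bound:
  fixes d x c :: "complex fls"
  assumes "d \<noteq> 0" "fls_subdegree d = 1" "d * x = c" "in_Cz c"
  shows "fls_subdegree x \<ge> -1"
proof (cases "x = 0")
  case True then show ?thesis by simp
next
  case False
  then have "fls_subdegree c = 1 + fls_subdegree x" using assms by (metis fls_subdegree_mult)
  then show ?thesis using assms(4) unfolding in_Cz_def by simp
qed

theorem lemma4p11:
  fixes A R :: mat2
  assumes diag: "A $ 1 $ 2 = 0" "A $ 2 $ 1 = 0"
    and invR: "invertible R"
    and R0: "\<forall>i j. in_Cz (mat_coeff 0 R $ i $ j)"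
    and detR0: "det (mat_coeff 0 R) \<noteq> 0" "fls_subdegree (det (mat_coeff 0 R)) = 1"
    and Atilde: "in_gl2_Czl (matrix_inv R ** A ** R + mat_lam (matrix_inv R ** mat_dz R))"
  shows "\<forall>i j. fls_subdegree (mat_coeff 1 A $ i $ j) \<ge> -1"
proof -
  define T where "T = matrix_inv R ** A ** R + mat_lam (matrix_inv R ** mat_dz R)"
  have RR: "R ** matrix_inv R = mat 1"
    using invR unfolding invertible_def matrix_inv_def by (rule someI_ex[THEN conjunct1])
  have eq: "R ** T = A ** R + mat_lam (mat_dz R)"
    unfolding T_def matrix_add_ldistrib lam_left matrix_mul_assoc RR by simp
  define R0 where "R0 = mat_coeff 0 R"
  define R1 where "R1 = mat_coeff 1 R"
  define T0 where "T0 = mat_coeff 0 T"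
  define T1 where "T1 = mat_coeff 1 T"
  define A0 where "A0 = mat_coeff 0 A"
  define A1 where "A1 = mat_coeff 1 A"
  define D where "D = mat_coeff 0 (mat_dz R)"
  define \<delta> where "\<delta> = det R0"
  define B :: "complex fls^2^2" where
    "B = (\<chi> i j. if i = 1 \<and> j = 1 then R0$2$2 else if i = 2 \<and> j = 2 then R0$1$1
            else - R0$i$j)"
  have eq0: "R0 ** T0 = A0 ** R0"
    using arg_cong[OF eq, of "mat_coeff 0"]
    unfolding R0_def T0_def A0_def mc0_mult mc_add mc0_lam by simp
  have eq1: "R0 ** T1 + R1 ** T0 = A0 ** R1 + A1 ** R0 + D"
    using arg_cong[OF eq, of "mat_coeff 1"]
    unfolding R0_def T0_def A0_def R1_def T1_def A1_def D_def mc1_mult mc_add mc1_lam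
    by (simp add: add.commute add.left_commute)
  have BR: "B ** R0 = mat \<delta>"
    unfolding \<delta>_def det_2
    by (simp add: vec_eq_iff forall_2 matrix_matrix_mult_def sum_2 B_def mat_def algebra_simps)
  have RB: "R0 ** B = mat \<delta>"
    unfolding \<delta>_def det_2
    by (simp add: vec_eq_iff forall_2 matrix_matrix_mult_def sum_2 B_def mat_def algebra_simps)
  have dnz: "\<delta> \<noteq> 0" using detR0 unfolding \<delta>_def R0_def by simp
  have TB: "T0 ** B = B ** A0"
  proof -
    have "B ** (R0 ** T0) ** B = B ** (A0 ** R0) ** B" using eq0 by simp
    then have "mat \<delta> ** (T0 ** B) = (B ** A0) ** mat \<delta>"
      by (metis BR RB matrix_mul_assoc)
    then have "\<forall>i j. \<delta> * (T0 ** B) $ i $ j = \<delta> * (B ** A0) $ i $ j"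
      by (metis mat_left mat_right mult.commute)
    then show ?thesis using dnz by (simp add: vec_eq_iff)
  qed
  have eq2: "R0 ** T1 ** B + R1 ** B ** A0 = A0 ** (R1 ** B) + mat \<delta> ** A1 + D ** B"
  proof -
    have "(R0 ** T1 + R1 ** T0) ** B = (A0 ** R1 + A1 ** R0 + D) ** B" using eq1 by simp
    then have "R0 ** T1 ** B + R1 ** (T0 ** B) = A0 ** R1 ** B + A1 ** (R0 ** B) + D ** B"
      by (simp add: rdistrib matrix_mul_assoc)
    then show ?thesis unfolding TB RB
      by (metis matrix_mul_assoc mat_left mat_right mult.commute vec_eq_iff)
  qed
  have A0d: "A0 $ 1 $ 2 = 0" "A0 $ 2 $ 1 = 0"
    using diag by (simp_all add: A0_def mat_coeff_def)
  have comm: "(R1 ** B ** A0) $ i $ i = (A0 ** (R1 ** B)) $ i $ i" for i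
    using A0d exhaust_2[of i]
    by (auto simp: matrix_matrix_mult_def sum_2 mult.commute)
  have key: "\<delta> * A1 $ i $ i = (R0 ** T1 ** B) $ i $ i - (D ** B) $ i $ i" for i
  proof -
    have "(R0 ** T1 ** B) $ i $ i + (R1 ** B ** A0) $ i $ i
        = (A0 ** (R1 ** B)) $ i $ i + \<delta> * A1 $ i $ i + (D ** B) $ i $ i"
      using arg_cong[OF eq2, of "\<lambda>M. M $ i $ i"] by (simp add: mat_left)
    then show ?thesis using comm[of i] by (simp add: algebra_simps)
  qed
  have R0c: "in_Cz (R0 $ i $ j)" for i j using R0 R0_def by simp
  have T1c: "in_Cz (T1 $ i $ j)" for i j
    using Atilde unfolding in_gl2_Czl_def T1_def T_def mat_coeff_def by simp
  have Dc: "in_Cz (D $ i $ j)" for i j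
    unfolding D_def mc_dz using R0c[unfolded R0_def] by (simp add: in_Cz_deriv)
  have Bc: "in_Cz (B $ i $ j)" for i j
    using R0c by (simp add: B_def in_Cz_iff)
  have prodc: "in_Cz ((X ** Y) $ i $ j)"
    if "\<And>i j. in_Cz (X $ i $ j)" "\<And>i j. in_Cz (Y $ i $ j)" for X Y :: "complex fls^2^2" and i j
    using that by (simp add: matrix_matrix_mult_def sum_2 in_Cz_add in_Cz_mult)
  have rhs: "in_Cz ((R0 ** T1 ** B) $ i $ i - (D ** B) $ i $ i)" for i
    by (intro in_Cz_diff prodc R0c T1c Bc Dc)
  show ?thesis
  proof (intro allI)
    fix i j :: 2
    show "fls_subdegree (mat_coeff 1 A $ i $ j) \<ge> -1"
    proof (cases "i = j")
      case True
      then show ?thesis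
        using sub_bound[OF dnz _ key rhs] detR0 unfolding \<delta>_def R0_def A1_def by simp
    next
      case False
      then have "A $ i $ j = 0" using diag exhaust_2[of i] exhaust_2[of j] by auto
      then show ?thesis by (simp add: mat_coeff_def)
    qed
  qed
qed

end
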